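(* Let $A\in\mathbb{R}^{n\times n}$, $B\in\mathbb{R}^{n\times m}$, $C\in\mathbb{R}^{p\times n}$ and let $\mathscr{G}$ be a weighted directed graph on $N$ nodes with Laplacian $\mathcal{L}$, and consider the dynamic network $(A,B,C,\mathscr{G})$ described in the context. Let $L_{G}=+\infty$, $L_{K}=+\infty$ and $\varrho=1$. Suppose that for any given positive constants $C_{x}$, $C_{\hat{x}}$, $C_{\hat{u}}$ there exist a communication protocol $H(\gamma,\alpha,\alpha_{u},L,L_{u},G)\in\mathscr{H}(\varrho,L_{G})$ and a control protocol $U(K)\in\mathscr{U}(L_{K})$ such that for any initial conditions with $\|X(0)\|_\infty<C_{x}$, $\|\hat{X}(0)\|_\infty<C_{\hat{x}}$ and $\|\hat{U}(0)\|_\infty<C_{\hat{u}}$, the closed-loop network achieves inter-agent state observation under $H$ and $U$, i.e. $\lim_{t\to\infty}(x_j(t)-\hat x_j(t))=0$ for all $j=1,\dots,N$. Then $(A,C)$ is detectable.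
   Context: Agents $i=1,\dots,N$ have dynamics $x_i(t+1)=Ax_i(t)+Bu_i(t)$, $y_i(t)=Cx_i(t)$, $t=0,1,\dots$. The communication graph $\mathscr{G}$ has node set $\{1,\dots,N\}$ and weighted adjacency matrix $\mathscr{A}=[a_{ij}]$ with $a_{ii}=0$, $a_{ij}\ge0$, and $a_{ij}>0$ iff there is a channel from $j$ to $i$; $N_i=\{j: a_{ij}>0\}$. The Laplacian is $\mathcal{L}=\mathrm{diag}(\sum_j a_{1j},\dots,\sum_j a_{Nj})-\mathscr{A}$. Norms: for a vector, $\|\cdot\|_\infty$ is the max norm; for a matrix, $\|\cdot\|$ is the spectral (Euclidean operator) norm. Quantizer: for $p\in(0,1]$ and a positive integer $M$, $Q_{p,M}(y)=ip$ if $ip-p/2\le y<ip+p/2$, $i=0,1,\dots,M-1$; $Q_{p,M}(y)=Mp$ if $y\ge Mp-p/2$; $Q_{p,M}(y)=-Q_{p,M}(-y)$ if $y<-p/2$; applied componentwise to vectors. Communication protocol set: for $\varrho\in(0,1]$ and $L_G\in\mathbb{R}^+\cup\{+\infty\}$, $\mathscr{H}(\varrho,L_G)$ consists of protocols $H(\gamma,\alpha,\alpha_u,L,L_u,G)$ with $\gamma\in(0,\varrho)$, $\alpha,\alpha_u\in(0,1]$, positive integers $L,L_u$, and $G\in\mathbb{R}^{n\times p}$ with $\|G\|<L_G$. Under such a protocol, each agent $j$ runs the encoder: $\hat x_j(0)=\hat x_{j0}$, $\hat u_j(0)=\hat u_{j0}$, and for $t\ge1$: $s_j(t)=Q_{\alpha,L}\big((y_j(t-1)-C\hat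 x_j(t-1))/\gamma^{t-1}\big)$, $\hat x_j(t)=A\hat x_j(t-1)+\gamma^{t-1}Gs_j(t)+B\hat u_j(t-1)$, $s_{u,j}(t)=Q_{\alpha_u,L_u}\big((u_j(t)-\hat u_j(t-1))/\gamma^{t-1}\big)$, $\hat u_j(t)=\hat u_j(t-1)+\gamma^{t-1}s_{u,j}(t)$; the symbols $s_j(t),s_{u,j}(t)$ are sent over each channel $(j,i)$, and receiver $i$ runs the decoder $\hat x_{ji}(0)=\hat x_{j0}$, $\hat u_{ji}(0)=\hat u_{j0}$, $\hat x_{ji}(t)=A\hat x_{ji}(t-1)+\gamma^{t-1}Gs_j(t)+B\hat u_{ji}(t-1)$, $\hat u_{ji}(t)=\hat u_{ji}(t-1)+\gamma^{t-1}s_{u,j}(t)$ (so $\hat x_{ji}(t)=\hat x_j(t)$). Control protocol set: for $L_K\in\mathbb{R}^+\cup\{+\infty\}$, $\mathscr{U}(L_K)$ consists of protocols $U(K)$, $K\in\mathbb{R}^{m\times n}$ with $\|K\|<L_K$, given by $u_i(t)=K\sum_{j\in N_i}a_{ij}(\hat x_{ji}(t)-\hat x_i(t))$, $t\ge0$. Stacked vectors: $X(t)=(x_1^T(t),\dots,x_N^T(t))^T$, $\hat X(t)=(\hat x_1^T(t),\dots,\hat x_N^T(t))^T$, $\hat U(t)=(\hat u_1^T(t),\dots,\hat u_N^T(t))^T$. *)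

theory Defs
  imports "HOL-Analysis.Analysis"
begin

text \<open>Scalar quantizer Q_{p,M}. For 0 <= ... the branch i p with
 i p - p/2 <= y < i p + p/2, i = 0..M-1, is i = floor (y/p + 1/2).\<close>
definition quant_nonneg :: "real \<Rightarrow> nat \<Rightarrow> real \<Rightarrow> real" where
  "quant_nonneg q M y =
     (if y \<ge> real M * q - q / 2 then real M * q
      else real_of_int \<lfloor>y / q + 1 / 2\<rfloor> * q)"

definition quant :: "real \<Rightarrow> nat \<Rightarrow> real \<Rightarrow> real" where
  "quant q M y = (if y < - q / 2 then - quant_nonneg q M (- y) else quant_nonneg q M y)"

definition vquant :: "real \<Rightarrow> nat \<Rightarrow> real ^ 'k \<Rightarrow> real ^ 'k" where
  "vquant q M v = (\<chi> k. quant q M (v $ k))"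

definition cmat :: "real ^ 'n ^ 'n \<Rightarrow> complex ^ 'n ^ 'n" where
  "cmat M = (\<chi> i j. complex_of_real (M $ i $ j))"

definition schur_stable :: "real ^ 'n ^ 'n \<Rightarrow> bool" where
  "schur_stable M \<longleftrightarrow>
     (\<forall>(lam::complex) (v::complex ^ 'n). v \<noteq> 0 \<and> cmat M *v v = (\<chi> k. lam * v $ k)
        \<longrightarrow> cmod lam < 1)"

definition detectable :: "real ^ 'n ^ 'n \<Rightarrow> real ^ 'n ^ 'p \<Rightarrow> bool" where
  "detectable A C \<longleftrightarrow> (\<exists>L :: real ^ 'p ^ 'n. schur_stable (A + L ** C))"

text \<open>Agents are indexed by the finite type 'i, adjacency a.
 x, u : states/inputs; xh, uh : encoder states (decoder states coincide: xh_ji = xh_j);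
 s, su : transmitted symbols.\<close>
definition closed_loop ::
  "real ^ 'n ^ 'n \<Rightarrow> real ^ 'm ^ 'n \<Rightarrow> real ^ 'n ^ 'p \<Rightarrow> ('i::finite \<Rightarrow> 'i \<Rightarrow> real) \<Rightarrow>
   real \<Rightarrow> real \<Rightarrow> real \<Rightarrow> nat \<Rightarrow> nat \<Rightarrow> real ^ 'p ^ 'n \<Rightarrow> real ^ 'n ^ 'm \<Rightarrow>
   (nat \<Rightarrow> 'i \<Rightarrow> real ^ 'n) \<Rightarrow> (nat \<Rightarrow> 'i \<Rightarrow> real ^ 'm) \<Rightarrow>
   (nat \<Rightarrow> 'i \<Rightarrow> real ^ 'n) \<Rightarrow> (nat \<Rightarrow> 'i \<Rightarrow> real ^ 'm) \<Rightarrow>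
   (nat \<Rightarrow> 'i \<Rightarrow> real ^ 'p) \<Rightarrow> (nat \<Rightarrow> 'i \<Rightarrow> real ^ 'm) \<Rightarrow> bool" where
  "closed_loop A B C a \<gamma> \<alpha> \<alpha>u L Lu G K x u xh uh s su \<longleftrightarrow>
     (\<forall>t i. x (Suc t) i = A *v x t i + B *v u t i) \<and>
     (\<forall>t i. u t i = K *v (\<Sum>j\<in>{j. a i j > 0}. a i j *\<^sub>R (xh t j - xh t i))) \<and>
     (\<forall>t i. t \<ge> 1 \<longrightarrow>
        s t i = vquant \<alpha> L ((1 / \<gamma> ^ (t - 1)) *\<^sub>R (C *v x (t - 1) i - C *v xh (t - 1) i)) \<and>
        xh t i = A *v xh (t - 1) i + \<gamma> ^ (t - 1) *\<^sub>R (G *v s t i) + B *v uh (t - 1) i \<and>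
        su t i = vquant \<alpha>u Lu ((1 / \<gamma> ^ (t - 1)) *\<^sub>R (u t i - uh (t - 1) i)) \<and>
        uh t i = uh (t - 1) i + \<gamma> ^ (t - 1) *\<^sub>R su t i)"

end

theory Submission imports Defs begin

lemma rinv_sub:
  fixes f :: "'a::euclidean_space \<Rightarrow> 'b::euclidean_space"
  assumes lf: "linear f" and S: "subspace S"
  shows "\<exists>\<rho>. linear \<rho> \<and> (\<forall>y. \<rho> y \<in> S) \<and> (\<forall>y\<in>f ` S. f (\<rho> y) = y)"
proof -
  obtain Bs where Bs: "Bs \<subseteq> f ` S" "independent Bs" "f ` S \<subseteq> span Bs" "card Bs = dim (f ` S)"
    by (rule basis_exists)
  obtain Bf where Bf: "Bs \<subseteq> Bf" "independent Bf" "UNIV \<subseteq> span Bf"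
    by (rule maximal_independent_subset_extend[OF subset_UNIV Bs(2)]) simp
  have "\<forall>b\<in>Bs. \<exists>x\<in>S. f x = b" using Bs(1) by blast
  then obtain pre where pre: "\<forall>b\<in>Bs. pre b \<in> S \<and> f (pre b) = b" by metis
  define h where "h b = (if b \<in> Bs then pre b else 0)" for b
  obtain g where g: "linear g" "\<forall>x\<in>Bf. g x = h x" "range g = span (h ` Bf)"
    using linear_independent_extend_subspace[OF Bf(2), of h] by blast
  have "h ` Bf \<subseteq> S" using pre S by (auto simp: h_def subspace_0)
  hence "span (h ` Bf) \<subseteq> S" using S by (simp add: span_minimal)
  hence 1: "\<forall>y. g y \<in> S" using g(3) by blast
  have 2: "f (g y) = y" if "y \<in> f ` S" for y
  proof -
    have "y \<in> span Bs" using that Bs(3) by blast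
    moreover have "linear (f \<circ> g)" using lf g(1) linear_compose by blast
    moreover have "\<forall>x\<in>Bs. (f \<circ> g) x = id x" using g(2) Bf(1) pre by (auto simp: h_def)
    ultimately have "(f \<circ> g) y = id y"
      using linear_eq_on_span[of "f \<circ> g" id Bs y] linear_id by auto
    thus ?thesis by simp
  qed
  show ?thesis using g(1) 1 2 by blast
qed

lemma flag_rinv:
  fixes f :: "'a::euclidean_space \<Rightarrow> 'b::euclidean_space"
  assumes lf: "linear f"
  shows "(\<forall>j. subspace (R j)) \<Longrightarrow> (\<forall>j. R (Suc j) \<subseteq> R j) \<Longrightarrow> (\<forall>j\<ge>N. R j = R N) \<Longrightarrow>
    \<exists>\<phi>. linear \<phi> \<and> (\<forall>j y. y \<in> f ` R j \<longrightarrow> \<phi> y \<in> R j) \<and> (\<forall>y\<in>f ` R 0. f (\<phi> y) = y)"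
proof (induction N arbitrary: R)
  case 0
  obtain \<rho> where \<rho>: "linear \<rho>" "\<forall>y. \<rho> y \<in> R 0" "\<forall>y\<in>f ` R 0. f (\<rho> y) = y"
    using rinv_sub[OF lf] 0(1) by blast
  have Rj: "R j = R 0" for j using 0(3) by blast
  show ?case
  proof (rule exI[of _ \<rho>], intro conjI allI impI ballI)
    show "linear \<rho>" by (rule \<rho>(1))
  next
    fix j y assume "y \<in> f ` R j" show "\<rho> y \<in> R j" using \<rho>(2) Rj[of j] by simp
  next
    fix y assume "y \<in> f ` R 0" then show "f (\<rho> y) = y" using \<rho>(3) by blast
  qed
next
  case (Suc N)
  define R' where "R' j = R (Suc j)" for j
  have p1: "\<forall>j. subspace (R' j)" using Suc.prems(1) by (simp add: R'_def)
  have p2: "\<forall>j. R' (Suc j) \<subseteq> R' j" using Suc.prems(2) by (simp add: R'_def)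
  have p3: "\<forall>j\<ge>N. R' j = R' N"
  proof (intro allI impI)
    fix j assume "N \<le> j"
    then have "Suc N \<le> Suc j" by simp
    with Suc.prems(3) have "R (Suc j) = R (Suc N)" by blast
    then show "R' j = R' N" by (simp add: R'_def)
  qed
  obtain \<phi> where \<phi>: "linear \<phi>" "\<forall>j y. y \<in> f ` R' j \<longrightarrow> \<phi> y \<in> R' j"
     "\<forall>y\<in>f ` R' 0. f (\<phi> y) = y"
    using Suc.IH[of R', OF p1 p2 p3] by blast
  obtain \<rho> where \<rho>: "linear \<rho>" "\<forall>y. \<rho> y \<in> R 0" "\<forall>y\<in>f ` R 0. f (\<rho> y) = y"
    using rinv_sub[OF lf] Suc.prems(1) by blast
  have sD: "subspace (f ` R' 0)" using linear_subspace_image[OF lf] p1 by blast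
  have s0: "subspace (f ` R 0)" using linear_subspace_image[OF lf] Suc.prems(1) by blast
  obtain P where P: "linear P" "\<forall>y. P y \<in> f ` R' 0" "\<forall>y\<in>id ` f ` R' 0. id (P y) = y"
    using rinv_sub[OF linear_id sD] by blast
  have P3: "P y = y" if "y \<in> f ` R' 0" for y using P(3) that by auto
  have dec: "R k \<subseteq> R j" if "j \<le> k" for j k
    using that Suc.prems(2) by (induction k rule: dec_induct) blast+
  have R'0: "R' 0 \<subseteq> R 0" using dec[of 0 "Suc 0"] by (simp add: R'_def)
  define \<psi> where "\<psi> y = \<phi> (P y) + \<rho> (y - P y)" for y
  have lin: "linear \<psi>"
  proof (rule linearI)
    fix x y show "\<psi> (x + y) = \<psi> x + \<psi> y"
      unfolding \<psi>_def linear_add[OF P(1)] linear_add[OF \<phi>(1)] linear_diff[OF \<rho>(1)] linear_add[OF \<rho>(1)]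
      by (simp add: algebra_simps)
  next
    fix c x show "\<psi> (c *\<^sub>R x) = c *\<^sub>R \<psi> x"
      unfolding \<psi>_def linear_scale[OF P(1)] linear_scale[OF \<phi>(1)] linear_diff[OF \<rho>(1)] linear_scale[OF \<rho>(1)]
      by (simp add: algebra_simps)
  qed
  have lev: "\<psi> y \<in> R j" if "y \<in> f ` R j" for j y
  proof (cases j)
    case 0
    have "\<phi> (P y) \<in> R' 0" using \<phi>(2) P(2) by blast
    hence "\<phi> (P y) \<in> R 0" using R'0 by blast
    moreover have "\<rho> (y - P y) \<in> R 0" using \<rho>(2) by blast
    ultimately show ?thesis using 0 Suc.prems(1) by (simp add: \<psi>_def subspace_add)
  next
    case (Suc k)
    have "R j \<subseteq> R' 0" using dec[of "Suc 0" j] \<open>j = Suc k\<close> by (simp add: R'_def)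
    hence "y \<in> f ` R' 0" using that by blast
    hence "P y = y" using P3 by blast
    hence "\<psi> y = \<phi> y" by (simp add: \<psi>_def linear_0[OF \<rho>(1)])
    moreover have "\<phi> y \<in> R' k" using \<phi>(2) that \<open>j = Suc k\<close> by (simp add: R'_def)
    ultimately show ?thesis using \<open>j = Suc k\<close> by (simp add: R'_def)
  qed
  have inv: "f (\<psi> y) = y" if "y \<in> f ` R 0" for y
  proof -
    have "P y \<in> f ` R 0" using P(2) R'0 by blast
    hence "y - P y \<in> f ` R 0" using s0 that by (simp add: subspace_diff)
    hence "f (\<rho> (y - P y)) = y - P y" using \<rho>(3) by blast
    moreover have "f (\<phi> (P y)) = P y" using P(2) \<phi>(3) by blast
    ultimately show ?thesis by (simp add: \<psi>_def linear_add[OF lf])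
  qed
  show ?case using lin lev inv by blast
qed


fun flag :: "real^'n^'n \<Rightarrow> real^'n^'p \<Rightarrow> nat \<Rightarrow> (real^'n) set" where
  "flag A C 0 = UNIV"
| "flag A C (Suc j) = (\<lambda>x. A *v x) ` (flag A C j \<inter> {x. C *v x = 0})"

lemma lin_mv: "linear (\<lambda>x. (M::real^'a^'b) *v x)"
  using matrix_vector_mul_linear[of M] by simp

lemma flag_subspace: "subspace (flag A C j)"
proof (induction j)
  case 0 show ?case by (simp add: subspace_UNIV)
next
  case (Suc j)
  have "subspace {x. C *v x = 0}" by (rule linear_subspace_kernel[OF lin_mv])
  then have "subspace (flag A C j \<inter> {x. C *v x = 0})" using Suc by (simp add: subspace_inter)
  then show ?case by (simp add: linear_subspace_image[OF lin_mv])
qed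

lemma flag_dec: "flag A C (Suc j) \<subseteq> flag A C j"
proof (induction j)
  case 0 show ?case by simp
next
  case (Suc j)
  then show ?case by (simp only: flag.simps) blast
qed

lemma flag_stab:
  fixes A :: "real^'n^'n" and C :: "real^'n^'p"
  shows "flag A C (Suc DIM(real^'n)) = flag A C DIM(real^'n)"
proof (rule ccontr)
  let ?N = "DIM(real^'n)"
  assume ne: "flag A C (Suc ?N) \<noteq> flag A C ?N"
  have prp: "flag A C (Suc m) = flag A C m" if "k \<le> m" "flag A C (Suc k) = flag A C k" for k m
    using that by (induction m rule: dec_induct) simp_all
  have "dim (flag A C k) + k \<le> ?N" if "k \<le> Suc ?N" for k
    using that
  proof (induction k)
    case 0 show ?case by (simp add: dim_UNIV)
  next
    case (Suc k)
    have "flag A C (Suc k) \<noteq> flag A C k" using prp[of k ?N] ne Suc.prems by auto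
    hence "flag A C (Suc k) \<subset> flag A C k" using flag_dec[of A C k] by blast
    hence "dim (flag A C (Suc k)) < dim (flag A C k)"
      by (metis dim_psubset flag_subspace span_eq_iff)
    thus ?case using Suc by simp
  qed
  from this[of "Suc ?N"] show False by simp
qed

lemma flag_const:
  fixes A :: "real^'n^'n" and C :: "real^'n^'p"
  shows "j \<ge> DIM(real^'n) \<Longrightarrow> flag A C j = flag A C DIM(real^'n)"
proof (induction j rule: dec_induct)
  case base then show ?case by simp
next
  case (step j)
  have "flag A C (Suc j) = flag A C (Suc DIM(real^'n))" by (simp only: flag.simps step.IH)
  then show ?case using flag_stab by simp
qed

lemma flag_T:
  fixes A :: "real^'n^'n" and C :: "real^'n^'p" and T
  defines "T \<equiv> flag A C DIM(real^'n)"
  shows "\<forall>y\<in>T. C *v y = 0" "\<forall>y\<in>T. A *v y \<in> T"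
proof -
  let ?K = "{x. C *v x = 0}"
  have T: "T = (\<lambda>x. A *v x) ` (T \<inter> ?K)"
    using flag_stab[of A C] unfolding T_def by (simp only: flag.simps)
  have sub: "subspace (T \<inter> ?K)"
    using flag_subspace linear_subspace_kernel[OF lin_mv] subspace_inter unfolding T_def by blast
  have "dim T \<le> dim (T \<inter> ?K)"
    using dim_image_le[OF lin_mv[of A], of "T \<inter> ?K"] T by simp
  hence eq: "T \<inter> ?K = T"
    using subspace_dim_equal[OF sub, of T] flag_subspace unfolding T_def by blast
  show "\<forall>y\<in>T. C *v y = 0" using eq by blast
  show "\<forall>y\<in>T. A *v y \<in> T"
  proof
    fix y assume "y \<in> T"
    hence "A *v y \<in> (\<lambda>x. A *v x) ` (T \<inter> ?K)" using eq by blast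
    thus "A *v y \<in> T" using T by simp
  qed
qed

lemma vquant0:
  assumes "q > 0" "M > 0"
  shows "vquant q M 0 = 0"
proof -
  have "real M \<ge> 1" using assms by simp
  hence "real M * q \<ge> q" using assms by simp
  hence "\<not> (0::real) \<ge> real M * q - q / 2" using assms by linarith
  hence "quant q M 0 = 0" using assms by (simp add: quant_def quant_nonneg_def)
  thus ?thesis by (simp add: vquant_def vec_eq_iff)
qed

theorem theorem6:
  fixes A :: "real ^ 'n ^ 'n" and B :: "real ^ 'm ^ 'n" and C :: "real ^ 'n ^ 'p"
    and a :: "'i::finite \<Rightarrow> 'i \<Rightarrow> real"
  assumes adj_diag: "\<forall>i. a i i = 0"
    and adj_nonneg: "\<forall>i j. a i j \<ge> 0"
    and hyp: "\<forall>Cx Cxh Cuh :: real. Cx > 0 \<and> Cxh > 0 \<and> Cuh > 0 \<longrightarrow>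
      (\<exists>(\<gamma>::real) (\<alpha>::real) (\<alpha>u::real) (L::nat) (Lu::nat)
          (G :: real ^ 'p ^ 'n) (K :: real ^ 'n ^ 'm).
         0 < \<gamma> \<and> \<gamma> < 1 \<and> 0 < \<alpha> \<and> \<alpha> \<le> 1 \<and> 0 < \<alpha>u \<and> \<alpha>u \<le> 1 \<and>
         L > 0 \<and> Lu > 0 \<and>
         (\<forall>x u xh uh s su.
            closed_loop A B C a \<gamma> \<alpha> \<alpha>u L Lu G K x u xh uh s su \<and>
            (\<forall>i k. \<bar>x 0 i $ k\<bar> < Cx) \<and>
            (\<forall>i k. \<bar>xh 0 i $ k\<bar> < Cxh) \<and>
            (\<forall>i k. \<bar>uh 0 i $ k\<bar> < Cuh)
            \<longrightarrow> (\<forall>j. (\<lambda>t. x t j - xh t j) \<longlonglongrightarrow> 0)))"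
  shows "detectable A C"
proof -
  let ?Af = "\<lambda>v. A *v v"
  have unobs: "(\<lambda>t. (?Af ^^ t) x0) \<longlonglongrightarrow> 0" if h0: "\<forall>k. C *v ((?Af ^^ k) x0) = 0" for x0
  proof -
    define Cx where "Cx = (\<Sum>k\<in>UNIV. \<bar>x0 $ k\<bar>) + 1"
    have Cxb: "\<bar>x0 $ k\<bar> < Cx" for k
    proof -
      have "\<bar>x0 $ k\<bar> \<le> (\<Sum>k\<in>UNIV. \<bar>x0 $ k\<bar>)" by (rule member_le_sum) auto
      thus ?thesis by (simp add: Cx_def)
    qed
    have Cxp: "Cx > 0" using Cxb[of undefined] by linarith
    obtain \<gamma> \<alpha> \<alpha>u L Lu G K where hh: "0 < \<gamma> \<and> \<gamma> < 1 \<and> 0 < \<alpha> \<and> \<alpha> \<le> 1 \<and> 0 < \<alpha>u \<and> \<alpha>u \<le> 1 \<and>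
         L > 0 \<and> Lu > 0 \<and>
         (\<forall>x u xh uh s su.
            closed_loop A B C a \<gamma> \<alpha> \<alpha>u L Lu G K x u xh uh s su \<and>
            (\<forall>i k. \<bar>x 0 i $ k\<bar> < Cx) \<and>
            (\<forall>i k. \<bar>xh 0 i $ k\<bar> < 1) \<and>
            (\<forall>i k. \<bar>uh 0 i $ k\<bar> < 1)
            \<longrightarrow> (\<forall>j. (\<lambda>t. x t j - xh t j) \<longlonglongrightarrow> 0))"
      using hyp[rule_format, of Cx 1 1] Cxp by auto
    define x where "x t i = (?Af ^^ t) x0" for t and i :: 'i
    have q1: "vquant \<alpha> L 0 = 0" using hh vquant0 by blast
    have q2: "vquant \<alpha>u Lu 0 = 0" using hh vquant0 by blast
    have h0': "C *v (?Af ^^ k) x0 = 0" for k using h0 by blast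
    have cl: "closed_loop A B C a \<gamma> \<alpha> \<alpha>u L Lu G K x (\<lambda>_ _. 0) (\<lambda>_ _. 0) (\<lambda>_ _. 0) (\<lambda>_ _. 0) (\<lambda>_ _. 0)"
      unfolding closed_loop_def x_def by (simp add: h0' q1 q2)
    have b1: "\<forall>i k. \<bar>x 0 i $ k\<bar> < Cx" by (simp add: x_def Cxb)
    have "\<forall>j. (\<lambda>t. x t j - (\<lambda>_ _. (0::real^'n)) t j) \<longlonglongrightarrow> 0"
      using hh[THEN conjunct2, THEN conjunct2, THEN conjunct2, THEN conjunct2, THEN conjunct2,
          THEN conjunct2, THEN conjunct2, THEN conjunct2, rule_format,
          of x "\<lambda>_ _. 0" "\<lambda>_ _. 0" "\<lambda>_ _. 0" "\<lambda>_ _. 0" "\<lambda>_ _. 0"]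
        cl b1 by simp
    then show ?thesis by (simp add: x_def)
  qed
  define N where "N = DIM(real^'n)"
  define T where "T = flag A C N"
  have TK: "C *v y = 0" if "y \<in> T" for y using flag_T(1)[of A C] that unfolding T_def N_def by blast
  have TA: "A *v y \<in> T" if "y \<in> T" for y using flag_T(2)[of A C] that unfolding T_def N_def by blast
  have "\<exists>\<phi>. linear \<phi> \<and> (\<forall>j y. y \<in> (\<lambda>x. C *v x) ` flag A C j \<longrightarrow> \<phi> y \<in> flag A C j) \<and>
      (\<forall>y\<in>(\<lambda>x. C *v x) ` flag A C 0. C *v (\<phi> y) = y)"
    using flag_rinv[OF lin_mv[of C], of "flag A C" N] flag_subspace flag_dec flag_const
    unfolding N_def by blast
  then obtain \<phi> where \<phi>: "linear \<phi>" "\<forall>j y. y \<in> (\<lambda>x. C *v x) ` flag A C j \<longrightarrow> \<phi> y \<in> flag A C j"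
      "\<forall>y\<in>(\<lambda>x. C *v x) ` flag A C 0. C *v (\<phi> y) = y" by blast
  have \<phi>3: "C *v \<phi> (C *v x) = C *v x" for x using \<phi>(3) by simp
  define g where "g y = - (A *v \<phi> y)" for y
  have lg: "linear g"
  proof (rule linearI)
    fix x y show "g (x + y) = g x + g y"
      by (simp add: g_def linear_add[OF \<phi>(1)] matrix_vector_right_distrib)
  next
    fix c x show "g (c *\<^sub>R x) = c *\<^sub>R g x"
      by (simp add: g_def linear_scale[OF \<phi>(1)] matrix_vector_mult_scaleR)
  qed
  define Lm where "Lm = matrix g"
  have Lm: "Lm *v y = g y" for y unfolding Lm_def using lg by (simp add: matrix_works)
  define M where "M = A + Lm ** C"
  have Mx: "M *v x = A *v (x - \<phi> (C *v x))" for x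
    by (simp add: M_def matrix_vector_mult_add_rdistrib matrix_vector_mul_assoc[symmetric] Lm g_def
        matrix_vector_mult_diff_distrib)
  have step: "M *v x \<in> flag A C (Suc j)" if "x \<in> flag A C j" for x j
  proof -
    have "\<phi> (C *v x) \<in> flag A C j" using \<phi>(2) that by blast
    hence "x - \<phi> (C *v x) \<in> flag A C j" using that flag_subspace subspace_diff by blast
    moreover have "C *v (x - \<phi> (C *v x)) = 0" using \<phi>3 by (simp add: matrix_vector_mult_diff_distrib)
    ultimately have "x - \<phi> (C *v x) \<in> flag A C j \<inter> {x. C *v x = 0}" by blast
    hence "A *v (x - \<phi> (C *v x)) \<in> (\<lambda>x. A *v x) ` (flag A C j \<inter> {x. C *v x = 0})" by (rule imageI)
    thus ?thesis by (simp add: Mx)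
  qed
  let ?Mf = "\<lambda>v. M *v v"
  have iter: "(?Mf ^^ k) x \<in> flag A C k" for k x
  proof (induction k)
    case 0 show ?case by simp
  next
    case (Suc k) show ?case using step[OF Suc.IH] by simp
  qed
  have MA: "M *v y = A *v y" if "y \<in> T" for y
    using Mx[of y] TK[OF that] linear_0[OF \<phi>(1)] by simp
  have convM: "(\<lambda>k. (?Mf ^^ k) x) \<longlonglongrightarrow> 0" for x
  proof -
    define y where "y = (?Mf ^^ N) x"
    have yT: "y \<in> T" using iter unfolding y_def T_def by blast
    have inT: "(?Af ^^ k) y \<in> T" for k by (induction k) (auto simp: yT TA)
    have eq: "(?Mf ^^ (k + N)) x = (?Af ^^ k) y" for k
    proof (induction k)
      case 0 show ?case by (simp add: y_def)
    next
      case (Suc k)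
      have "(?Mf ^^ (Suc k + N)) x = M *v ((?Af ^^ k) y)" using Suc.IH by simp
      also have "\<dots> = A *v ((?Af ^^ k) y)" by (rule MA[OF inT])
      finally show ?case by simp
    qed
    have "(\<lambda>k. (?Af ^^ k) y) \<longlonglongrightarrow> 0" using unobs TK inT by blast
    hence "(\<lambda>k. (?Mf ^^ (k + N)) x) \<longlonglongrightarrow> 0" by (simp add: eq)
    thus ?thesis by (rule LIMSEQ_offset)
  qed
  show ?thesis unfolding detectable_def schur_stable_def
  proof (intro exI[of _ Lm] allI impI)
    fix lam :: complex and v :: "complex^'n"
    assume "v \<noteq> 0 \<and> cmat (A + Lm ** C) *v v = (\<chi> k. lam * v $ k)"
    hence vne: "v \<noteq> 0" and ev: "cmat M *v v = (\<chi> k. lam * v $ k)" by (auto simp: M_def)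
    define vr where "vr = (\<chi> i. Re (v $ i))"
    define vi where "vi = (\<chi> i. Im (v $ i))"
    have comp: "(cmat M *v w) $ i = (\<Sum>j\<in>UNIV. complex_of_real (M $ i $ j) * w $ j)" for w i
      by (simp add: cmat_def matrix_vector_mult_def)
    have evi: "lam * v $ i = (\<Sum>j\<in>UNIV. complex_of_real (M $ i $ j) * v $ j)" for i
      using arg_cong[OF ev, of "\<lambda>w. w $ i"] comp[of v i] by simp
    have key: "lam ^ k * v $ i = complex_of_real ((?Mf ^^ k) vr $ i) + \<i> * complex_of_real ((?Mf ^^ k) vi $ i)" for k i
    proof (induction k arbitrary: i)
      case 0 show ?case by (simp add: vr_def vi_def complex_eq[symmetric])
    next
      case (Suc k)
      have "lam ^ Suc k * v $ i = lam ^ k * (lam * v $ i)" by simp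
      also have "\<dots> = lam ^ k * (\<Sum>j\<in>UNIV. complex_of_real (M $ i $ j) * v $ j)" by (simp add: evi)
      also have "\<dots> = (\<Sum>j\<in>UNIV. complex_of_real (M $ i $ j) * (lam ^ k * v $ j))"
        by (simp add: sum_distrib_left mult.left_commute)
      also have "\<dots> = (\<Sum>j\<in>UNIV. complex_of_real (M $ i $ j) * (complex_of_real ((?Mf ^^ k) vr $ j) + \<i> * complex_of_real ((?Mf ^^ k) vi $ j)))"
        by (simp add: Suc.IH)
      also have "\<dots> = complex_of_real (\<Sum>j\<in>UNIV. M $ i $ j * (?Mf ^^ k) vr $ j) + \<i> * complex_of_real (\<Sum>j\<in>UNIV. M $ i $ j * (?Mf ^^ k) vi $ j)"
        by (simp add: sum.distrib sum_distrib_left distrib_left algebra_simps)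
      also have "\<dots> = complex_of_real ((?Mf ^^ Suc k) vr $ i) + \<i> * complex_of_real ((?Mf ^^ Suc k) vi $ i)"
        by (simp add: matrix_vector_mult_def)
      finally show ?case .
    qed
    obtain i where vi0: "v $ i \<noteq> 0" using vne by (metis vec_eq_iff zero_index)
    have t1: "(\<lambda>k. (?Mf ^^ k) vr $ i) \<longlonglongrightarrow> 0" using tendsto_vec_nth[OF convM[of vr], of i] by simp
    have t2: "(\<lambda>k. (?Mf ^^ k) vi $ i) \<longlonglongrightarrow> 0" using tendsto_vec_nth[OF convM[of vi], of i] by simp
    have "(\<lambda>k. complex_of_real ((?Mf ^^ k) vr $ i) + \<i> * complex_of_real ((?Mf ^^ k) vi $ i)) \<longlonglongrightarrow> 0"
      using tendsto_add[OF tendsto_of_real[OF t1] tendsto_mult[OF tendsto_const tendsto_of_real[OF t2]]] by simp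
    hence "(\<lambda>k. lam ^ k * v $ i) \<longlonglongrightarrow> 0" by (simp add: key)
    hence "(\<lambda>k. cmod (lam ^ k * v $ i)) \<longlonglongrightarrow> 0" using tendsto_norm by fastforce
    hence lim: "(\<lambda>k. cmod lam ^ k * cmod (v $ i)) \<longlonglongrightarrow> 0" by (simp add: norm_mult norm_power)
    show "cmod lam < 1"
    proof (rule ccontr)
      assume "\<not> cmod lam < 1"
      hence "cmod lam ^ k \<ge> 1" for k by (simp add: one_le_power)
      hence "cmod (v $ i) \<le> cmod lam ^ k * cmod (v $ i)" for k
        using mult_right_mono[of 1 "cmod lam ^ k" "cmod (v $ i)"] by simp
      hence "cmod (v $ i) \<le> 0" using LIMSEQ_le_const[OF lim] by blast
      with vi0 show False by simp
    qed
  qed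
qed

end
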